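(* Every Ferrers-convex matrix is convex and has unimodal row and column sum vectors.
   Context: A $(0,1)$-matrix is convex if the 1's occur consecutively in every row and in every column. A Ferrers array is a left-justified array of positions where the numbers of positions in the rows form a nonincreasing vector; a Ferrers matrix is a $(0,1)$-matrix the positions of whose 1's form a Ferrers array. Let $m_1,m_2,n_1,n_2$ be positive integers. A Ferrers-convex matrix is a matrix $A=\begin{bmatrix} A_{11} & A_{12}\\ A_{21} & A_{22}\end{bmatrix}$, where $A_{22}$, $A_{12}$, $A_{21}$, $A_{11}$ are matrices obtained by rotating some (possibly different) Ferrers matrices by $0$, $90$, $180$ and $270$ degrees counterclockwise, respectively, with $A_{11}$ of size $m_1\times n_1$ and $A_{22}$ of size $m_2\times n_2$ (which determines the sizes of $A_{12}$ and $A_{21}$). A vector is unimodal if its components are first nondecreasing and then nonincreasing. *)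

theory Defs
  imports Main
begin

text \<open>A p x q matrix is represented as a function M :: nat => nat => nat,
  with row indices i < p and column indices j < q (entries outside are irrelevant).\<close>

definition zero_one_matrix :: "nat \<Rightarrow> nat \<Rightarrow> (nat \<Rightarrow> nat \<Rightarrow> nat) \<Rightarrow> bool" where
  "zero_one_matrix p q M \<longleftrightarrow> (\<forall>i<p. \<forall>j<q. M i j = 0 \<or> M i j = 1)"

definition ferrers_matrix :: "nat \<Rightarrow> nat \<Rightarrow> (nat \<Rightarrow> nat \<Rightarrow> nat) \<Rightarrow> bool" where
  "ferrers_matrix p q F \<longleftrightarrow> zero_one_matrix p q F \<and>
     (\<exists>r :: nat \<Rightarrow> nat. (\<forall>i<p. r i \<le> q) \<and> (\<forall>i k. i \<le> k \<longrightarrow> k < p \<longrightarrow> r k \<le> r i) \<and>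
        (\<forall>i<p. \<forall>j<q. F i j = 1 \<longleftrightarrow> j < r i))"

text \<open>Counterclockwise rotations of a p x q matrix (90 and 270 give q x p matrices).\<close>
definition rot90 :: "nat \<Rightarrow> nat \<Rightarrow> (nat \<Rightarrow> nat \<Rightarrow> nat) \<Rightarrow> (nat \<Rightarrow> nat \<Rightarrow> nat)" where
  "rot90 p q F = (\<lambda>i j. F j (q - 1 - i))"

definition rot180 :: "nat \<Rightarrow> nat \<Rightarrow> (nat \<Rightarrow> nat \<Rightarrow> nat) \<Rightarrow> (nat \<Rightarrow> nat \<Rightarrow> nat)" where
  "rot180 p q F = (\<lambda>i j. F (p - 1 - i) (q - 1 - j))"

definition rot270 :: "nat \<Rightarrow> nat \<Rightarrow> (nat \<Rightarrow> nat \<Rightarrow> nat) \<Rightarrow> (nat \<Rightarrow> nat \<Rightarrow> nat)" where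
  "rot270 p q F = (\<lambda>i j. F (p - 1 - j) i)"

definition ferrers_convex :: "nat \<Rightarrow> nat \<Rightarrow> nat \<Rightarrow> nat \<Rightarrow> (nat \<Rightarrow> nat \<Rightarrow> nat) \<Rightarrow> bool" where
  "ferrers_convex m1 m2 n1 n2 A \<longleftrightarrow>
     (\<exists>F11 F12 F21 F22.
        ferrers_matrix m1 n1 F11 \<and> ferrers_matrix n2 m1 F12 \<and>
        ferrers_matrix n1 m2 F21 \<and> ferrers_matrix m2 n2 F22 \<and>
        (\<forall>i<m1. \<forall>j<n1. A i j = rot180 m1 n1 F11 i j) \<and>
        (\<forall>i<m1. \<forall>j<n2. A i (n1 + j) = rot90 n2 m1 F12 i j) \<and>
        (\<forall>i<m2. \<forall>j<n1. A (m1 + i) j = rot270 n1 m2 F21 i j) \<and>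
        (\<forall>i<m2. \<forall>j<n2. A (m1 + i) (n1 + j) = F22 i j))"

definition convex_matrix :: "nat \<Rightarrow> nat \<Rightarrow> (nat \<Rightarrow> nat \<Rightarrow> nat) \<Rightarrow> bool" where
  "convex_matrix p q A \<longleftrightarrow> zero_one_matrix p q A \<and>
     (\<forall>i<p. \<forall>j1 j j2. j1 \<le> j \<longrightarrow> j \<le> j2 \<longrightarrow> j2 < q \<longrightarrow> A i j1 = 1 \<longrightarrow> A i j2 = 1 \<longrightarrow> A i j = 1) \<and>
     (\<forall>j<q. \<forall>i1 i i2. i1 \<le> i \<longrightarrow> i \<le> i2 \<longrightarrow> i2 < p \<longrightarrow> A i1 j = 1 \<longrightarrow> A i2 j = 1 \<longrightarrow> A i j = 1)"

definition unimodal :: "nat \<Rightarrow> (nat \<Rightarrow> nat) \<Rightarrow> bool" where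
  "unimodal N v \<longleftrightarrow> (\<exists>k. (\<forall>i j. i \<le> j \<longrightarrow> j \<le> k \<longrightarrow> j < N \<longrightarrow> v i \<le> v j) \<and>
                          (\<forall>i j. k \<le> i \<longrightarrow> i \<le> j \<longrightarrow> j < N \<longrightarrow> v j \<le> v i))"

definition row_sums :: "nat \<Rightarrow> (nat \<Rightarrow> nat \<Rightarrow> nat) \<Rightarrow> nat \<Rightarrow> nat" where
  "row_sums q A = (\<lambda>i. \<Sum>j<q. A i j)"

definition col_sums :: "nat \<Rightarrow> (nat \<Rightarrow> nat \<Rightarrow> nat) \<Rightarrow> nat \<Rightarrow> nat" where
  "col_sums p A = (\<lambda>j. \<Sum>i<p. A i j)"

end

theory Submission
  imports Defs
begin

lemma gen_unimodal:
  fixes A :: "nat \<Rightarrow> nat \<Rightarrow> nat"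
  assumes Z: "\<forall>i<M. \<forall>j<N. A i j = 0 \<or> A i j = 1"
    and R1: "\<forall>i i' j. i \<le> i' \<longrightarrow> i' < m \<longrightarrow> j < N \<longrightarrow> A i j = 1 \<longrightarrow> A i' j = 1"
    and R2: "\<forall>i i' j. m \<le> i \<longrightarrow> i \<le> i' \<longrightarrow> i' < M \<longrightarrow> j < N \<longrightarrow> A i' j = 1 \<longrightarrow> A i j = 1"
    and m: "0 < m" "m < M"
  shows "unimodal M (row_sums N A)"
proof -
  define v where "v = row_sums N A"
  have up: "v i \<le> v i'" if "i \<le> i'" "i' < m" for i i'
    unfolding v_def row_sums_def
  proof (rule sum_mono)
    fix j assume "j \<in> {..<N}"
    then have "j < N" by simp
    then show "A i j \<le> A i' j" using Z R1 that m
      by (metis less_trans order.strict_trans1 le_less not_less zero_le)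
  qed
  have down: "v i' \<le> v i" if "m \<le> i" "i \<le> i'" "i' < M" for i i'
    unfolding v_def row_sums_def
  proof (rule sum_mono)
    fix j assume "j \<in> {..<N}"
    then have "j < N" by simp
    then show "A i' j \<le> A i j" using Z R2 that m
      by (metis order.strict_trans1 le_less not_less zero_le)
  qed
  show ?thesis
  proof (cases "v (m - 1) \<le> v m")
    case True
    show ?thesis unfolding unimodal_def v_def[symmetric]
    proof (rule exI[of _ m], intro conjI allI impI)
      fix i j assume "i \<le> j" "j \<le> m" "j < M"
      show "v i \<le> v j"
      proof (cases "j < m")
        case True then show ?thesis using up \<open>i \<le> j\<close> by blast
      next
        case False
        then have "j = m" using \<open>j \<le> m\<close> by simp
        show ?thesis
        proof (cases "i = m")
          case True then show ?thesis using \<open>j = m\<close> by simp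
        next
          case False
          then have "v i \<le> v (m - 1)" using up \<open>i \<le> j\<close> \<open>j = m\<close> m by simp
          then show ?thesis using \<open>v (m - 1) \<le> v m\<close> \<open>j = m\<close> by simp
        qed
      qed
    next
      fix i j assume "m \<le> i" "i \<le> j" "j < M"
      then show "v j \<le> v i" using down by blast
    qed
  next
    case False
    show ?thesis unfolding unimodal_def v_def[symmetric]
    proof (rule exI[of _ "m - 1"], intro conjI allI impI)
      fix i j assume "i \<le> j" "j \<le> m - 1" "j < M"
      then show "v i \<le> v j" using up m by simp
    next
      fix i j assume "m - 1 \<le> i" "i \<le> j" "j < M"
      show "v j \<le> v i"
      proof (cases "m \<le> i")
        case True then show ?thesis using down \<open>i \<le> j\<close> \<open>j < M\<close> by blast
      next
        case False
        then have "i = m - 1" using \<open>m - 1 \<le> i\<close> by simp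
        show ?thesis
        proof (cases "j = i")
          case True then show ?thesis by simp
        next
          case False
          then have "m \<le> j" using \<open>i = m - 1\<close> \<open>i \<le> j\<close> by simp
          then have "v j \<le> v m" using down \<open>j < M\<close> by blast
          then show ?thesis using \<open>\<not> v (m - 1) \<le> v m\<close> \<open>i = m - 1\<close> by simp
        qed
      qed
    qed
  qed
qed

lemma gen_convex_col:
  fixes A :: "nat \<Rightarrow> nat \<Rightarrow> nat"
  assumes R1: "\<forall>i i' j. i \<le> i' \<longrightarrow> i' < m \<longrightarrow> j < N \<longrightarrow> A i j = 1 \<longrightarrow> A i' j = 1"
    and R2: "\<forall>i i' j. m \<le> i \<longrightarrow> i \<le> i' \<longrightarrow> i' < M \<longrightarrow> j < N \<longrightarrow> A i' j = 1 \<longrightarrow> A i j = 1"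
  shows "\<forall>j<N. \<forall>i1 i i2. i1 \<le> i \<longrightarrow> i \<le> i2 \<longrightarrow> i2 < M \<longrightarrow> A i1 j = 1 \<longrightarrow> A i2 j = 1 \<longrightarrow> A i j = 1"
proof (intro allI impI)
  fix j i1 i i2 assume "j < N" "i1 \<le> i" "i \<le> i2" "i2 < M" "A i1 j = 1" "A i2 j = 1"
  then show "A i j = 1"
  proof (cases "i < m")
    case True then show ?thesis using R1 \<open>j < N\<close> \<open>i1 \<le> i\<close> \<open>A i1 j = 1\<close> by blast
  next
    case False then show ?thesis using R2 \<open>j < N\<close> \<open>i \<le> i2\<close> \<open>i2 < M\<close> \<open>A i2 j = 1\<close>
      by (meson not_less)
  qed
qed

theorem mainTheorem7:
  fixes m1 m2 n1 n2 :: nat and A :: "nat \<Rightarrow> nat \<Rightarrow> nat"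
  assumes "0 < m1" "0 < m2" "0 < n1" "0 < n2"
    and "ferrers_convex m1 m2 n1 n2 A"
  shows "convex_matrix (m1 + m2) (n1 + n2) A
       \<and> unimodal (m1 + m2) (row_sums (n1 + n2) A)
       \<and> unimodal (n1 + n2) (col_sums (m1 + m2) A)"
proof -
  obtain F11 F12 F21 F22 where
    f11: "ferrers_matrix m1 n1 F11" and f12: "ferrers_matrix n2 m1 F12" and
    f21: "ferrers_matrix n1 m2 F21" and f22: "ferrers_matrix m2 n2 F22" and
    a11: "\<forall>i<m1. \<forall>j<n1. A i j = F11 (m1 - 1 - i) (n1 - 1 - j)" and
    a12: "\<forall>i<m1. \<forall>j<n2. A i (n1 + j) = F12 j (m1 - 1 - i)" and
    a21: "\<forall>i<m2. \<forall>j<n1. A (m1 + i) j = F21 (n1 - 1 - j) i" and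
    a22: "\<forall>i<m2. \<forall>j<n2. A (m1 + i) (n1 + j) = F22 i j"
    using assms(5) unfolding ferrers_convex_def rot90_def rot180_def rot270_def by blast
  obtain r11 where r11: "\<forall>i<m1. r11 i \<le> n1" "\<forall>i k. i \<le> k \<longrightarrow> k < m1 \<longrightarrow> r11 k \<le> r11 i"
      "\<forall>i<m1. \<forall>j<n1. F11 i j = 1 \<longleftrightarrow> j < r11 i" and z11: "zero_one_matrix m1 n1 F11"
    using f11 unfolding ferrers_matrix_def by blast
  obtain r12 where r12: "\<forall>i<n2. r12 i \<le> m1" "\<forall>i k. i \<le> k \<longrightarrow> k < n2 \<longrightarrow> r12 k \<le> r12 i"
      "\<forall>i<n2. \<forall>j<m1. F12 i j = 1 \<longleftrightarrow> j < r12 i" and z12: "zero_one_matrix n2 m1 F12"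
    using f12 unfolding ferrers_matrix_def by blast
  obtain r21 where r21: "\<forall>i<n1. r21 i \<le> m2" "\<forall>i k. i \<le> k \<longrightarrow> k < n1 \<longrightarrow> r21 k \<le> r21 i"
      "\<forall>i<n1. \<forall>j<m2. F21 i j = 1 \<longleftrightarrow> j < r21 i" and z21: "zero_one_matrix n1 m2 F21"
    using f21 unfolding ferrers_matrix_def by blast
  obtain r22 where r22: "\<forall>i<m2. r22 i \<le> n2" "\<forall>i k. i \<le> k \<longrightarrow> k < m2 \<longrightarrow> r22 k \<le> r22 i"
      "\<forall>i<m2. \<forall>j<n2. F22 i j = 1 \<longleftrightarrow> j < r22 i" and z22: "zero_one_matrix m2 n2 F22"
    using f22 unfolding ferrers_matrix_def by blast
  define M where "M = m1 + m2"
  define N where "N = n1 + n2"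
  have Z: "\<forall>i<M. \<forall>j<N. A i j = 0 \<or> A i j = 1"
  proof (intro allI impI)
    fix i j assume i: "i < M" and j: "j < N"
    show "A i j = 0 \<or> A i j = 1"
    proof (cases "i < m1")
      case True
      show ?thesis
      proof (cases "j < n1")
        case True
        then show ?thesis using a11 z11 \<open>i < m1\<close> unfolding zero_one_matrix_def by simp
      next
        case False
        then obtain j0 where "j = n1 + j0" "j0 < n2" using j N_def by (metis add_less_cancel_left le_Suc_ex not_less)
        then show ?thesis using a12 z12 \<open>i < m1\<close> unfolding zero_one_matrix_def by simp
      qed
    next
      case False
      then obtain i0 where i0: "i = m1 + i0" "i0 < m2" using i M_def by (metis add_less_cancel_left le_Suc_ex not_less)
      show ?thesis
      proof (cases "j < n1")
        case True
        then show ?thesis using a21 z21 i0 unfolding zero_one_matrix_def by simp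
      next
        case False
        then obtain j0 where "j = n1 + j0" "j0 < n2" using j N_def by (metis add_less_cancel_left le_Suc_ex not_less)
        then show ?thesis using a22 z22 i0 unfolding zero_one_matrix_def by simp
      qed
    qed
  qed
  have R1: "\<forall>i i' j. i \<le> i' \<longrightarrow> i' < m1 \<longrightarrow> j < N \<longrightarrow> A i j = 1 \<longrightarrow> A i' j = 1"
  proof (intro allI impI)
    fix i i' j assume h: "i \<le> i'" "i' < m1" "j < N" "A i j = 1"
    show "A i' j = 1"
    proof (cases "j < n1")
      case True
      have "n1 - 1 - j < r11 (m1 - 1 - i)" using h a11 r11(3) True by simp
      moreover have "r11 (m1 - 1 - i) \<le> r11 (m1 - 1 - i')" using r11(2) h by simp
      ultimately show ?thesis using a11 r11(3) True h by simp
    next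
      case False
      then obtain j0 where j0: "j = n1 + j0" "j0 < n2" using h N_def by (metis add_less_cancel_left le_Suc_ex not_less)
      have "m1 - 1 - i < r12 j0" using h a12 r12(3) j0 by simp
      then show ?thesis using a12 r12(3) j0 h by simp
    qed
  qed
  have R2: "\<forall>i i' j. m1 \<le> i \<longrightarrow> i \<le> i' \<longrightarrow> i' < M \<longrightarrow> j < N \<longrightarrow> A i' j = 1 \<longrightarrow> A i j = 1"
  proof (intro allI impI)
    fix i i' j assume h: "m1 \<le> i" "i \<le> i'" "i' < M" "j < N" "A i' j = 1"
    obtain a where a: "i = m1 + a" using h(1) le_Suc_ex by blast
    obtain a' where a': "i' = m1 + a'" using h(1,2) le_Suc_ex by (metis le_trans)
    have aa: "a \<le> a'" "a' < m2" using a a' h M_def by auto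
    show "A i j = 1"
    proof (cases "j < n1")
      case True
      have "a' < r21 (n1 - 1 - j)" using h a21 r21(3) True a' aa by simp
      then show ?thesis using a21 r21(3) True aa a by simp
    next
      case False
      then obtain j0 where j0: "j = n1 + j0" "j0 < n2" using h N_def by (metis add_less_cancel_left le_Suc_ex not_less)
      have "j0 < r22 a'" using h a22 r22(3) j0 a' aa by simp
      moreover have "r22 a' \<le> r22 a" using r22(2) aa by simp
      ultimately show ?thesis using a22 r22(3) j0 a aa by simp
    qed
  qed
  have C1: "\<forall>j j' i. j \<le> j' \<longrightarrow> j' < n1 \<longrightarrow> i < M \<longrightarrow> A i j = 1 \<longrightarrow> A i j' = 1"
  proof (intro allI impI)
    fix j j' i assume h: "j \<le> j'" "j' < n1" "i < M" "A i j = 1"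
    show "A i j' = 1"
    proof (cases "i < m1")
      case True
      have "n1 - 1 - j < r11 (m1 - 1 - i)" using h a11 r11(3) True by simp
      then show ?thesis using a11 r11(3) True h by simp
    next
      case False
      then obtain i0 where i0: "i = m1 + i0" "i0 < m2" using h M_def by (metis add_less_cancel_left le_Suc_ex not_less)
      have "i0 < r21 (n1 - 1 - j)" using h a21 r21(3) i0 by simp
      moreover have "r21 (n1 - 1 - j) \<le> r21 (n1 - 1 - j')" using r21(2) h by simp
      ultimately show ?thesis using a21 r21(3) i0 h by simp
    qed
  qed
  have C2: "\<forall>j j' i. n1 \<le> j \<longrightarrow> j \<le> j' \<longrightarrow> j' < N \<longrightarrow> i < M \<longrightarrow> A i j' = 1 \<longrightarrow> A i j = 1"
  proof (intro allI impI)
    fix j j' i assume h: "n1 \<le> j" "j \<le> j'" "j' < N" "i < M" "A i j' = 1"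
    obtain b where b: "j = n1 + b" using h(1) le_Suc_ex by blast
    obtain b' where b': "j' = n1 + b'" using h(1,2) le_Suc_ex by (metis le_trans)
    have bb: "b \<le> b'" "b' < n2" using b b' h N_def by auto
    show "A i j = 1"
    proof (cases "i < m1")
      case True
      have "m1 - 1 - i < r12 b'" using h a12 r12(3) True b' bb by simp
      moreover have "r12 b' \<le> r12 b" using r12(2) bb by simp
      ultimately show ?thesis using a12 r12(3) True b bb by simp
    next
      case False
      then obtain i0 where i0: "i = m1 + i0" "i0 < m2" using h M_def by (metis add_less_cancel_left le_Suc_ex not_less)
      have "b' < r22 i0" using h a22 r22(3) i0 b' bb by simp
      then show ?thesis using a22 r22(3) i0 b bb by simp
    qed
  qed
  define B where "B = (\<lambda>j i. A i j)"
  have colc: "\<forall>j<N. \<forall>i1 i i2. i1 \<le> i \<longrightarrow> i \<le> i2 \<longrightarrow> i2 < M \<longrightarrow> A i1 j = 1 \<longrightarrow> A i2 j = 1 \<longrightarrow> A i j = 1"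
    by (rule gen_convex_col[OF R1 R2])
  have rowc: "\<forall>i<M. \<forall>j1 j j2. j1 \<le> j \<longrightarrow> j \<le> j2 \<longrightarrow> j2 < N \<longrightarrow> B j1 i = 1 \<longrightarrow> B j2 i = 1 \<longrightarrow> B j i = 1"
    by (rule gen_convex_col) (use C1 C2 in \<open>auto simp: B_def\<close>)
  have conv: "convex_matrix M N A"
    unfolding convex_matrix_def zero_one_matrix_def using Z colc rowc unfolding B_def by blast
  have u1: "unimodal M (row_sums N A)"
    by (rule gen_unimodal[OF Z R1 R2]) (use assms M_def in auto)
  have u2: "unimodal N (row_sums M B)"
    by (rule gen_unimodal[of N M B n1]) (use Z C1 C2 assms N_def in \<open>auto simp: B_def\<close>)
  have "col_sums M A = row_sums M B" unfolding col_sums_def row_sums_def B_def by simp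
  then show ?thesis using conv u1 u2 M_def N_def by simp
qed

end
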